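(* Let $k\ge 4$ be even, $1\le s\le k-1$, and let $G$ be a $k$-uniform $s$-cycle which is not regular. Then $G$ is odd-bipartite.
   Context: A $k$-uniform $s$-cycle with $m$ edges has vertex set $\mathbb{Z}_n$, $n=m(k-s)$ (vertex $n+i$ identified with $i$), and edges $e_j=\{j(k-s)+1,\ldots,j(k-s)+k\}$, $j=0,\ldots,m-1$; it is assumed that $n\ge 2k-s$. A hypergraph is regular if all vertex degrees (numbers of edges containing the vertex) are equal. A $k$-uniform hypergraph with $k$ even and vertex set $V$ is odd-bipartite if either it has no edges or there is a partition $V=V_1\cup V_2$ with $V_1,V_2\ne\emptyset$ such that every edge intersects $V_1$ in an odd number of vertices. *)

theory Defs
  imports Main
begin

text \<open>Vertices of the k-uniform s-cycle with m edges: Z_n with n = m(k-s),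
  represented as {0..<n} (vertex n identified with 0).\<close>

definition scycle_vertices :: "nat \<Rightarrow> nat \<Rightarrow> nat \<Rightarrow> nat set" where
  "scycle_vertices k s m = {0..<m * (k - s)}"

definition scycle_edge :: "nat \<Rightarrow> nat \<Rightarrow> nat \<Rightarrow> nat \<Rightarrow> nat set" where
  "scycle_edge k s m j = {(j * (k - s) + i) mod (m * (k - s)) | i. i \<in> {1..k}}"

definition scycle_edges :: "nat \<Rightarrow> nat \<Rightarrow> nat \<Rightarrow> nat set set" where
  "scycle_edges k s m = scycle_edge k s m ` {0..<m}"

definition degree :: "'a set set \<Rightarrow> 'a \<Rightarrow> nat" where
  "degree E v = card {e \<in> E. v \<in> e}"

definition hg_regular :: "'a set \<Rightarrow> 'a set set \<Rightarrow> bool" where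
  "hg_regular V E \<longleftrightarrow> (\<forall>u\<in>V. \<forall>v\<in>V. degree E u = degree E v)"

definition odd_bipartite :: "'a set \<Rightarrow> 'a set set \<Rightarrow> bool" where
  "odd_bipartite V E \<longleftrightarrow> E = {} \<or>
     (\<exists>V1 V2. V1 \<union> V2 = V \<and> V1 \<inter> V2 = {} \<and> V1 \<noteq> {} \<and> V2 \<noteq> {} \<and>
        (\<forall>e\<in>E. odd (card (e \<inter> V1))))"

end

theory Submission
  imports Defs
begin

lemma mod2: "(x::nat) < 2*n \<Longrightarrow> x mod n = (if x < n then x else x - n)"
  by (auto simp: le_mod_geq)

lemma mem_arc:
  assumes "k < n" "p < n" "v < n"
  shows "v \<in> (\<lambda>i. (p+i) mod n) ` {1..k} \<longleftrightarrow> (if p < v then v - p - 1 else v + n - p - 1) < (k::nat)"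
proof
  assume "v \<in> (\<lambda>i. (p+i) mod n) ` {1..k}"
  then obtain i where i: "1\<le>i" "i\<le>k" "v = (p+i) mod n" by auto
  then show "(if p < v then v - p - 1 else v + n - p - 1) < k"
    using mod2[of "p+i" n] assms by (auto split: if_splits)
next
  assume H: "(if p < v then v - p - 1 else v + n - p - 1) < k"
  show "v \<in> (\<lambda>i. (p+i) mod n) ` {1..k}"
  proof (cases "p < v")
    case True
    then show ?thesis using H assms
      by (intro image_eqI[where x="v-p"]) auto
  next
    case False
    have "(p + (v+n-p)) mod n = v" using False assms by simp
    then show ?thesis using H assms False
      by (intro image_eqI[where x="v+n-p"]) auto
  qed
qed

lemma arc_inj:
  assumes "k < n" "0 < k" "p < n" "p' < n"
    and eq: "(\<lambda>i. (p+i) mod n) ` {1..k} = (\<lambda>i. (p'+i) mod n) ` {1..k}"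
  shows "p = (p'::nat)"
proof -
  have "p \<notin> (\<lambda>i. (p+i) mod n) ` {1..k}" using mem_arc[of k n p p] assms by auto
  hence A: "\<not> (if p' < p then p - p' - 1 else p + n - p' - 1) < k"
    using mem_arc[of k n p' p] assms eq by simp
  define v1 where "v1 = (p+1) mod n"
  have v1: "v1 = (if p+1 < n then p+1 else 0)" using assms unfolding v1_def
    using mod2[of "p+1" n] by auto
  have "v1 \<in> (\<lambda>i. (p+i) mod n) ` {1..k}" unfolding v1_def using assms
    by (intro image_eqI[where x=1]) auto
  hence B: "(if p' < v1 then v1 - p' - 1 else v1 + n - p' - 1) < k"
    using mem_arc[of k n p' v1] assms eq v1 by (simp split: if_splits)
  show ?thesis using A B v1 assms by (auto split: if_splits)
qed

lemma arc_inj_i: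
  assumes "k < n" "p < n"
  shows "inj_on (\<lambda>i. (p+i) mod n) {1..(k::nat)}"
proof
  fix x y assume "x \<in> {1..k}" "y \<in> {1..k}" "(p+x) mod n = (p+y) mod n"
  then show "x = y" using mod2[of "p+x" n] mod2[of "p+y" n] assms by (auto split: if_splits)
qed

lemma involution_count:
  fixes a m q :: nat
  assumes "a < m" "q \<le> m"
  shows "card {j\<in>{0..<m}. (if j \<le> a then a - j else m + a - j) < q} = q"
proof -
  define h where "h j = (if j \<le> a then a - j else m + a - j)" for j
  have hm: "j < m \<Longrightarrow> h j < m" for j using assms unfolding h_def by auto
  have hh: "j < m \<Longrightarrow> h (h j) = j" for j using assms unfolding h_def by auto
  have "{j\<in>{0..<m}. h j < q} = h ` {0..<q}"
  proof
    show "{j\<in>{0..<m}. h j < q} \<subseteq> h ` {0..<q}"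
      using hh by (auto intro!: image_eqI)
    show "h ` {0..<q} \<subseteq> {j\<in>{0..<m}. h j < q}"
      using hh hm assms by auto
  qed
  moreover have "inj_on h {0..<q}"
    by (rule inj_on_inverseI[where g=h]) (use hh assms in auto)
  hence "card (h ` {0..<q}) = q" by (simp add: card_image)
  ultimately have "card {j\<in>{0..<m}. h j < q} = q" by simp
  thus ?thesis unfolding h_def .
qed

lemma lt_mul: assumes "(b::nat) < d" shows "(X*d + b < q*d) = (X < q)"
proof
  assume "X < q"
  hence "Suc X * d \<le> q * d" by (intro mult_le_mono1) simp
  thus "X*d + b < q*d" using assms by simp
next
  assume H: "X*d + b < q*d"
  show "X < q"
  proof (rule ccontr)
    assume "\<not> X < q" hence "q \<le> X" by simp
    hence "q*d \<le> X*d" by (rule mult_le_mono1)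
    thus False using H by linarith
  qed
qed

lemma le_mul: assumes "(b::nat) < d" shows "(j*d \<le> a*d + b) = (j \<le> a)"
proof
  assume H: "j*d \<le> a*d + b"
  show "j \<le> a"
  proof (rule ccontr)
    assume "\<not> j \<le> a" hence "Suc a \<le> j" by simp
    hence "Suc a * d \<le> j*d" by (rule mult_le_mono1)
    thus False using H assms by simp
  qed
next
  assume "j \<le> a" hence "j*d \<le> a*d" by (rule mult_le_mono1)
  thus "j*d \<le> a*d + b" by linarith
qed

lemma edge_eq: "scycle_edge k s m j = (\<lambda>i. (j*(k-s)+i) mod (m*(k-s))) ` {1..k}"
  by (auto simp: scycle_edge_def)

lemma regular_case:
  fixes k d m :: nat
  assumes d: "0 < d" and kn: "k < m*d" and k0: "0 < k" and dk: "d dvd k"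
    and v: "v < m*d"
  shows "card {j\<in>{0..<m}. v \<in> (\<lambda>i. (j*d+i) mod (m*d)) ` {1..k}} = k div d"
proof -
  define n where "n = m*d"
  define q where "q = k div d"
  have kq: "k = q*d" using dk unfolding q_def by auto
  define w where "w = (if v = 0 then n-1 else v-1)"
  have vn: "v < n" using v n_def by simp
  have wn: "w < n" using v unfolding w_def n_def by auto
  define a where "a = w div d"
  define b where "b = w mod d"
  have wab: "w = a*d + b" unfolding a_def b_def by simp
  have bd: "b < d" unfolding b_def using d by simp
  have am: "a < m" using wn wab unfolding n_def
    by (metis add_lessD1 d mult_less_cancel2)
  have qm: "q \<le> m" using kq kn lt_mul[OF d, of q m] by simp
  have eqv: "v \<in> (\<lambda>i. (j*d+i) mod n) ` {1..k} \<longleftrightarrow> (if j \<le> a then a - j else m + a - j) < q"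
    if j: "j < m" for j
  proof -
    have jn: "j*d < n" unfolding n_def using j d by simp
    have 1: "v \<in> (\<lambda>i. (j*d+i) mod n) ` {1..k} \<longleftrightarrow>
       (if j*d \<le> w then w - j*d else w + n - j*d) < k"
    proof -
      have "v \<in> (\<lambda>i. (j*d+i) mod n) ` {1..k} \<longleftrightarrow>
        (if j*d < v then v - j*d - 1 else v + n - j*d - 1) < k"
        by (rule mem_arc) (use kn jn v n_def in auto)
      moreover have "(if j*d < v then v - j*d - 1 else v + n - j*d - 1) =
          (if j*d \<le> w then w - j*d else w + n - j*d)"
        using jn vn unfolding w_def by (auto simp del: mult_less_cancel2)
      ultimately show ?thesis by simp
    qed
    show ?thesis
    proof (cases "j \<le> a")
      case True
      hence "j*d \<le> w" using le_mul[OF bd] wab by simp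
      moreover have "w - j*d = (a-j)*d + b" using wab True by (simp add: diff_mult_distrib)
      ultimately show ?thesis using 1 True lt_mul[OF bd, of "a-j" q] kq by simp
    next
      case False
      hence "\<not> j*d \<le> w" using le_mul[OF bd] wab by simp
      moreover have "w + n - j*d = (m+a-j)*d + b"
      proof -
        have "j*d \<le> m*d" using j by (intro mult_le_mono1) simp
        moreover have "(m+a-j)*d = m*d + a*d - j*d" by (simp add: diff_mult_distrib add_mult_distrib)
        ultimately show ?thesis using wab unfolding n_def by linarith
      qed
      ultimately show ?thesis using 1 False lt_mul[OF bd, of "m+a-j" q] kq by simp
    qed
  qed
  have "{j\<in>{0..<m}. v \<in> (\<lambda>i. (j*d+i) mod n) ` {1..k}} =
        {j\<in>{0..<m}. (if j \<le> a then a - j else m + a - j) < q}"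
    using eqv by (intro Collect_cong) (metis atLeastLessThan_iff)
  thus ?thesis using involution_count[OF am qm] unfolding n_def q_def by simp
qed

lemma count0:
  assumes d: "0 < (d::nat)"
  shows "card {i\<in>{1..k}. i mod d = 0} = k div d"
proof -
  have "{i\<in>{1..k}. i mod d = 0} = (\<lambda>t. t*d) ` {1..k div d}"
  proof
    show "{i\<in>{1..k}. i mod d = 0} \<subseteq> (\<lambda>t. t*d) ` {1..k div d}"
    proof
      fix i assume i: "i \<in> {i\<in>{1..k}. i mod d = 0}"
      hence e: "i = (i div d)*d" by auto
      have "i div d \<le> k div d" using i by (auto intro: div_le_mono)
      moreover have "i div d \<ge> 1" using i e by (metis One_nat_def atLeastAtMost_iff le_less_linear less_one mem_Collect_eq mult_0 not_one_le_zero)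
      ultimately show "i \<in> (\<lambda>t. t*d) ` {1..k div d}" using e by (intro image_eqI[where x="i div d"]) auto
    qed
    show "(\<lambda>t. t*d) ` {1..k div d} \<subseteq> {i\<in>{1..k}. i mod d = 0}"
    proof
      fix x assume "x \<in> (\<lambda>t. t*d) ` {1..k div d}"
      then obtain t where t: "1 \<le> t" "t \<le> k div d" "x = t*d" by auto
      have "t*d \<le> (k div d)*d" using t by (intro mult_le_mono1)
      also have "\<dots> \<le> k" by simp
      finally have "x \<le> k" using t by simp
      moreover have "1 \<le> x" using t d by simp
      ultimately show "x \<in> {i\<in>{1..k}. i mod d = 0}" using t by simp
    qed
  qed
  moreover have "inj_on (\<lambda>t. t*d) {1..k div d}" using d by (auto simp: inj_on_def)
  ultimately show ?thesis by (simp add: card_image)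
qed

lemma countr:
  assumes d: "0 < (d::nat)" and r: "0 < k mod d"
  shows "card {i\<in>{1..k}. i mod d = k mod d} = k div d + 1"
proof -
  have "{i\<in>{1..k}. i mod d = k mod d} = (\<lambda>t. t*d + k mod d) ` {0..k div d}"
  proof
    show "{i\<in>{1..k}. i mod d = k mod d} \<subseteq> (\<lambda>t. t*d + k mod d) ` {0..k div d}"
    proof
      fix i assume i: "i \<in> {i\<in>{1..k}. i mod d = k mod d}"
      hence e: "i = (i div d)*d + k mod d" by (metis (mono_tags, lifting) div_mult_mod_eq mem_Collect_eq)
      have "i div d \<le> k div d" using i by (auto intro: div_le_mono)
      thus "i \<in> (\<lambda>t. t*d + k mod d) ` {0..k div d}" using e by (intro image_eqI[where x="i div d"]) auto
    qed
    show "(\<lambda>t. t*d + k mod d) ` {0..k div d} \<subseteq> {i\<in>{1..k}. i mod d = k mod d}"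
    proof
      fix x assume "x \<in> (\<lambda>t. t*d + k mod d) ` {0..k div d}"
      then obtain t where t: "t \<le> k div d" "x = t*d + k mod d" by auto
      have "t*d \<le> (k div d)*d" using t by (intro mult_le_mono1)
      hence "x \<le> k" using t by (metis add_le_mono1 div_mult_mod_eq)
      moreover have "1 \<le> x" using t r by simp
      moreover have "x mod d = k mod d" using t by simp
      ultimately show "x \<in> {i\<in>{1..k}. i mod d = k mod d}" by simp
    qed
  qed
  moreover have "inj_on (\<lambda>t. t*d + k mod d) {0..k div d}" using d by (auto simp: inj_on_def)
  ultimately show ?thesis by (simp add: card_image)
qed

lemma edge_V1:
  assumes d: "0 < (d::nat)" and kn: "k < m*d" and j: "j < m"
  shows "card ((\<lambda>i. (j*d+i) mod (m*d)) ` {1..k} \<inter> {v\<in>{0..<m*d}. v mod d = c})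
     = card {i\<in>{1..k}. i mod d = c}"
proof -
  have jn: "j*d < m*d" using j d by simp
  have md: "((j*d+i) mod (m*d)) mod d = i mod d" for i
    by (simp add: mod_mod_cancel)
  have "(\<lambda>i. (j*d+i) mod (m*d)) ` {1..k} \<inter> {v\<in>{0..<m*d}. v mod d = c}
       = (\<lambda>i. (j*d+i) mod (m*d)) ` {i\<in>{1..k}. i mod d = c}"
    using md jn by auto
  moreover have "inj_on (\<lambda>i. (j*d+i) mod (m*d)) {i\<in>{1..k}. i mod d = c}"
    by (rule inj_on_subset[OF arc_inj_i[OF kn jn]]) auto
  ultimately show ?thesis by (simp add: card_image)
qed

theorem proposition4p2:
  fixes k s m :: nat
  assumes "even k" and "k \<ge> 4" and "1 \<le> s" and "s \<le> k - 1"
    and "m * (k - s) \<ge> 2 * k - s"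
    and "\<not> hg_regular (scycle_vertices k s m) (scycle_edges k s m)"
  shows "odd_bipartite (scycle_vertices k s m) (scycle_edges k s m)"
proof -
  define d where "d = k - s"
  define n where "n = m*d"
  define A where "A j = (\<lambda>i. (j*d+i) mod n) ` {1..k}" for j
  have d0: "0 < d" using assms unfolding d_def by simp
  have kn: "k < m*d" using assms unfolding d_def by simp
  have k0: "0 < k" using assms by simp
  have V: "scycle_vertices k s m = {0..<n}" unfolding scycle_vertices_def n_def d_def ..
  have E: "scycle_edges k s m = A ` {0..<m}"
    unfolding scycle_edges_def A_def edge_eq n_def d_def ..
  have injA: "inj_on A {0..<m}"
  proof
    fix x y assume x: "x \<in> {0..<m}" and y: "y \<in> {0..<m}" and "A x = A y"
    hence "x*d = y*d" using arc_inj[of k n "x*d" "y*d"] kn k0 d0 unfolding A_def n_def by simp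
    thus "x = y" using d0 by simp
  qed
  show ?thesis
  proof (cases "d dvd k")
    case True
    have deg: "degree (scycle_edges k s m) v = k div d" if v: "v \<in> {0..<n}" for v
    proof -
      have "{e \<in> A ` {0..<m}. v \<in> e} = A ` {j\<in>{0..<m}. v \<in> A j}" by auto
      moreover have "inj_on A {j\<in>{0..<m}. v \<in> A j}" by (rule inj_on_subset[OF injA]) auto
      ultimately have "degree (scycle_edges k s m) v = card {j\<in>{0..<m}. v \<in> A j}"
        unfolding degree_def E by (simp add: card_image)
      also have "\<dots> = k div d" unfolding A_def n_def
        by (rule regular_case[OF d0 kn k0 True]) (use v n_def in simp)
      finally show ?thesis .
    qed
    have "hg_regular (scycle_vertices k s m) (scycle_edges k s m)"
      unfolding hg_regular_def V using deg by simp
    thus ?thesis using assms by simp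
  next
    case False
    define q where "q = k div d"
    define r where "r = k mod d"
    have r0: "0 < r" using False unfolding r_def by (simp add: dvd_eq_mod_eq_0)
    have rd: "r < d" unfolding r_def using d0 by simp
    have d2: "2 \<le> d" proof (rule ccontr)
      assume "\<not> 2 \<le> d" hence "d = 1" using d0 by simp
      thus False using False by simp
    qed
    define c where "c = (if odd q then 0 else r)"
    have cd: "c < d" using rd d0 unfolding c_def by simp
    have cnt: "odd (card {i\<in>{1..k}. i mod d = c})"
    proof (cases "odd q")
      case True thus ?thesis using count0[OF d0, of k] unfolding c_def q_def by simp
    next
      case False thus ?thesis using countr[OF d0, of k] r0 unfolding c_def q_def r_def by simp
    qed
    define V1 where "V1 = {v\<in>{0..<n}. v mod d = c}"
    define V2 where "V2 = {v\<in>{0..<n}. v mod d \<noteq> c}"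
    have nd: "d < n" using kn d0 n_def assms unfolding d_def by linarith
    have "c \<in> V1" using cd nd unfolding V1_def by simp
    moreover have "V2 \<noteq> {}"
    proof (cases "c = 0")
      case True
      hence "1 \<in> V2" using d2 nd unfolding V2_def by simp
      thus ?thesis by auto
    next
      case False
      hence "0 \<in> V2" using nd unfolding V2_def by simp
      thus ?thesis by auto
    qed
    moreover have "V1 \<union> V2 = {0..<n}" "V1 \<inter> V2 = {}" unfolding V1_def V2_def by auto
    moreover have "\<forall>e\<in>A ` {0..<m}. odd (card (e \<inter> V1))"
    proof
      fix e assume "e \<in> A ` {0..<m}"
      then obtain j where j: "j < m" "e = A j" by auto
      show "odd (card (e \<inter> V1))"
        using edge_V1[OF d0 kn j(1), of c] cnt j unfolding A_def V1_def n_def by simp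
    qed
    ultimately show ?thesis unfolding odd_bipartite_def V E by blast
  qed
qed

end
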